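(* Let $(X,\mathrm{dist})$ be a metric space, $\Sigma$ a metric space, $\{U_\sigma(t,\tau)\}_{\sigma\in\Sigma}$ a family of processes on $X$, and $\Sigma_0\subset\Sigma$ a dense subset. Suppose that for every bounded set $C\subset X$ there exists $t_C\ge0$ such that the map $\sigma\mapsto U_\sigma(t,\tau)x$ from $\Sigma$ to $X$ is continuous for every fixed $x\in C$ and all $t,\tau$ with $t-\tau\ge t_C$. Then every set $K\subset X$ that is uniformly attracting for the subfamily $\{U_\sigma(t,\tau)\}_{\sigma\in\Sigma_0}$ is uniformly attracting for the whole family $\{U_\sigma(t,\tau)\}_{\sigma\in\Sigma}$.
   Context: A process on $X$ is a family of maps $U(t,\tau):X\to X$, indexed by reals $t\ge\tau$, with $U(\tau,\tau)=\mathrm{id}_X$ and $U(t,\tau)=U(t,s)U(s,\tau)$ for $t\ge s\ge\tau$. For nonempty $B,C\subset X$, $\delta_X(B,C)=\sup_{x\in B}\inf_{\xi\in C}\mathrm{dist}(x,\xi)$. For a family $\{U_\sigma(t,\tau)\}_{\sigma\in\Lambda}$, a set $K\subset X$ is uniformly attracting if for every bounded $C\subset X$, $\lim_{t-\tau\to\infty}\sup_{\sigma\in\Lambda}\delta_X(U_\sigma(t,\tau)C,K)=0$. *)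

theory Defs
  imports "HOL-Analysis.Analysis"
begin

definition is_process :: "(real \<Rightarrow> real \<Rightarrow> 'a \<Rightarrow> 'a) \<Rightarrow> bool" where
  "is_process U \<longleftrightarrow> (\<forall>\<tau>. U \<tau> \<tau> = id) \<and>
     (\<forall>t s \<tau>. \<tau> \<le> s \<and> s \<le> t \<longrightarrow> U t \<tau> = U t s \<circ> U s \<tau>)"

text \<open>Hausdorff semi-distance, valued in extended reals
  (sup over empty set is -infinity, inf over empty set is +infinity).\<close>
definition hsemidist :: "'a::metric_space set \<Rightarrow> 'a set \<Rightarrow> ereal" where
  "hsemidist B C = (SUP x\<in>B. INF \<xi>\<in>C. ereal (dist x \<xi>))"

text \<open>Since the semidistance is nonnegative, convergence to 0 is expressed as eventually below every eps.\<close>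
definition unif_attracting ::
  "('s \<Rightarrow> real \<Rightarrow> real \<Rightarrow> 'a::metric_space \<Rightarrow> 'a) \<Rightarrow> 's set \<Rightarrow> 'a set \<Rightarrow> bool" where
  "unif_attracting U Lam K \<longleftrightarrow>
     (\<forall>C. bounded C \<and> C \<noteq> {} \<longrightarrow>
        (\<forall>\<epsilon>>0. \<exists>T. \<forall>t \<tau>. t - \<tau> \<ge> T \<longrightarrow>
            (SUP \<sigma>\<in>Lam. hsemidist (U \<sigma> t \<tau> ` C) K) \<le> ereal \<epsilon>))"

end

theory Submission
  imports Defs
begin

theorem proposition3p10:
  fixes U :: "'s::metric_space \<Rightarrow> real \<Rightarrow> real \<Rightarrow> 'a::metric_space \<Rightarrow> 'a"
    and \<Sigma>\<^sub>0 :: "'s set" and K :: "'a set"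
  assumes proc: "\<And>\<sigma>. is_process (U \<sigma>)"
    and dense: "closure \<Sigma>\<^sub>0 = UNIV"
    and cont: "\<And>C. bounded C \<Longrightarrow> \<exists>t\<^sub>C \<ge> 0. \<forall>x\<in>C. \<forall>t \<tau>. t - \<tau> \<ge> t\<^sub>C \<longrightarrow>
                 continuous_on UNIV (\<lambda>\<sigma>. U \<sigma> t \<tau> x)"
    and attr: "unif_attracting U \<Sigma>\<^sub>0 K"
  shows "unif_attracting U UNIV K"
  unfolding unif_attracting_def
proof (intro allI impI)
  fix C :: "'a set" and \<epsilon> :: real
  assume C: "bounded C \<and> C \<noteq> {}" and ep: "\<epsilon> > 0"
  obtain tC where tC: "\<forall>x\<in>C. \<forall>t \<tau>. t - \<tau> \<ge> tC \<longrightarrow>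
                 continuous_on UNIV (\<lambda>\<sigma>. U \<sigma> t \<tau> x)"
    using cont C by blast
  obtain T where T: "\<And>t \<tau>. t - \<tau> \<ge> T \<Longrightarrow>
            (SUP \<sigma>\<in>\<Sigma>\<^sub>0. hsemidist (U \<sigma> t \<tau> ` C) K) \<le> ereal \<epsilon>"
    using attr C ep unfolding unif_attracting_def by blast
  show "\<exists>T. \<forall>t \<tau>. t - \<tau> \<ge> T \<longrightarrow>
            (SUP \<sigma>\<in>UNIV. hsemidist (U \<sigma> t \<tau> ` C) K) \<le> ereal \<epsilon>"
  proof (intro exI allI impI)
    fix t \<tau> :: real
    assume tt: "t - \<tau> \<ge> max T tC"
    have key: "(INF \<xi>\<in>K. ereal (dist (U \<sigma> t \<tau> x) \<xi>)) \<le> ereal \<epsilon>"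
      if x: "x \<in> C" for \<sigma> x
    proof (rule ereal_le_epsilon2)
      fix \<delta> :: real assume d: "0 < \<delta>"
      have co: "continuous_on UNIV (\<lambda>\<sigma>. U \<sigma> t \<tau> x)" using tC x tt by auto
      then have "continuous (at \<sigma>) (\<lambda>\<sigma>. U \<sigma> t \<tau> x)"
        by (simp add: continuous_on_eq_continuous_at)
      then obtain r where r: "r > 0" "\<And>s. dist s \<sigma> < r \<Longrightarrow> dist (U s t \<tau> x) (U \<sigma> t \<tau> x) < \<delta>/2"
        using d unfolding continuous_at_eps_delta by (metis half_gt_zero)
      have "\<sigma> \<in> closure \<Sigma>\<^sub>0" using dense by simp
      then obtain s where s: "s \<in> \<Sigma>\<^sub>0" "dist s \<sigma> < r"
        using r(1) unfolding closure_approachable by blast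
      have ds: "dist (U s t \<tau> x) (U \<sigma> t \<tau> x) < \<delta>/2" using r(2) s(2) by blast
      have "hsemidist (U s t \<tau> ` C) K \<le> ereal \<epsilon>"
        using T[of t \<tau>] tt s(1) by (meson SUP_upper max.boundedE order_trans)
      hence "(INF \<xi>\<in>K. ereal (dist (U s t \<tau> x) \<xi>)) \<le> ereal \<epsilon>"
        unfolding hsemidist_def using x by (meson SUP_le_iff imageI)
      hence "(INF \<xi>\<in>K. ereal (dist (U s t \<tau> x) \<xi>)) < ereal (\<epsilon> + \<delta>/2)"
        proof -
        have "ereal \<epsilon> < ereal (\<epsilon> + \<delta>/2)" using d by simp
        thus ?thesis using \<open>(INF \<xi>\<in>K. ereal (dist (U s t \<tau> x) \<xi>)) \<le> ereal \<epsilon>\<close> by (rule order_le_less_trans[rotated])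
      qed
      then obtain \<xi> where xi: "\<xi> \<in> K" "dist (U s t \<tau> x) \<xi> < \<epsilon> + \<delta>/2"
        by (auto simp: INF_less_iff)
      have "dist (U \<sigma> t \<tau> x) \<xi> \<le> dist (U s t \<tau> x) (U \<sigma> t \<tau> x) + dist (U s t \<tau> x) \<xi>"
        by (metis dist_commute dist_triangle)
      hence "dist (U \<sigma> t \<tau> x) \<xi> \<le> \<epsilon> + \<delta>" using ds xi by linarith
      hence "(INF \<xi>\<in>K. ereal (dist (U \<sigma> t \<tau> x) \<xi>)) \<le> ereal (\<epsilon> + \<delta>)"
        using xi(1) by (meson INF_lower2 ereal_less_eq(3))
      thus "(INF \<xi>\<in>K. ereal (dist (U \<sigma> t \<tau> x) \<xi>)) \<le> ereal \<epsilon> + ereal \<delta>" by simp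
    qed
    show "(SUP \<sigma>\<in>UNIV. hsemidist (U \<sigma> t \<tau> ` C) K) \<le> ereal \<epsilon>"
      unfolding hsemidist_def using key by (auto intro!: SUP_least)
  qed
qed

end
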